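(* We have $h_s(2) = 6$ and $h_s(3) = 12$.
   Context: A real matrix is called totally $1$-submodular if every square submatrix (of every size) has determinant of absolute value at most $1$. For $t \in \mathbb{R}^m$ and $A\in\mathbb{R}^{m\times n}$ with columns $A_1,\dots,A_n$, $t+A$ denotes the matrix with columns $t+A_1,\dots,t+A_n$. The shifted Heller constant $h_s(m)$ is the maximum $n$ such that there exist a vector $t \in [0,1)^m\setminus\{\mathbf 0\}$ and a matrix $A \in \{-1,0,1\}^{m\times n}$ with pairwise distinct columns such that $t+A$ is totally $1$-submodular. *)

theory Defs
  imports "Jordan_Normal_Form.Determinant" "Jordan_Normal_Form.DL_Submatrix"
begin

definition totally_1_submodular :: "real mat \<Rightarrow> bool" where
  "totally_1_submodular M \<longleftrightarrow>
     (\<forall>I J. I \<subseteq> {..<dim_row M} \<longrightarrow> J \<subseteq> {..<dim_col M} \<longrightarrow> card I = card J \<longrightarrow>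
        \<bar>det (submatrix M I J)\<bar> \<le> 1)"

definition shift_mat :: "real vec \<Rightarrow> int mat \<Rightarrow> real mat" where
  "shift_mat t A = mat (dim_row A) (dim_col A) (\<lambda>(i,j). t $ i + real_of_int (A $$ (i,j)))"

definition shifted_admissible :: "nat \<Rightarrow> nat \<Rightarrow> bool" where
  "shifted_admissible m n \<longleftrightarrow>
     (\<exists>(t :: real vec) (A :: int mat).
        t \<in> carrier_vec m \<and> (\<forall>i<m. 0 \<le> t $ i \<and> t $ i < 1) \<and> t \<noteq> 0\<^sub>v m \<and>
        A \<in> carrier_mat m n \<and> (\<forall>i<m. \<forall>j<n. A $$ (i,j) \<in> {-1, 0, 1}) \<and>
        (\<forall>j<n. \<forall>j'<n. j \<noteq> j' \<longrightarrow> col A j \<noteq> col A j') \<and>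
        totally_1_submodular (shift_mat t A))"

definition shifted_heller :: "nat \<Rightarrow> nat" where
  "shifted_heller m = (GREATEST n. shifted_admissible m n)"

end

theory Submission
  imports Defs
begin
lemma det0: "det (mat 0 0 f) = (1 :: 'a :: comm_ring_1)"
  by (simp add: det_def')
lemma det1: "det (mat (Suc 0) (Suc 0) f) = (f (0,0) :: 'a :: comm_ring_1)"
  by (subst laplace_expansion_column[of _ 1 0]) (auto simp: cofactor_def mat_delete_def det_def')
lemma det2: "det (mat 2 2 f) = (f (0,0) * f (1,1) - f(0,1) * f(1,0) :: 'a :: comm_ring_1)"
  apply (subst laplace_expansion_column[of _ 2 0])
  apply (auto simp: cofactor_def mat_delete_def numeral_2_eq_2 lessThan_Suc det1)
  done
lemma det2': "det (mat (Suc (Suc 0)) (Suc (Suc 0)) f) = (f (0,0) * f (1,1) - f(0,1) * f(1,0) :: 'a :: comm_ring_1)"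
  using det2[of f] by (simp add: numeral_2_eq_2)
lemma det3: "det (mat 3 3 f) = (f (0,0) * (f (1,1) * f(2,2) - f(1,2) * f(2,1))
   - f (1,0) * (f (0,1) * f(2,2) - f(0,2) * f(2,1)) + f (2,0) * (f (0,1) * f(1,2) - f(0,2) * f(1,1)) :: 'a :: comm_ring_1)"
  apply (subst laplace_expansion_column[of _ 3 0])
  apply (auto simp: cofactor_def mat_delete_def numeral_3_eq_3 lessThan_Suc det2' numeral_2_eq_2)
  apply (simp add: algebra_simps)
  done

definition D2 :: "real mat \<Rightarrow> nat \<Rightarrow> nat \<Rightarrow> nat \<Rightarrow> nat \<Rightarrow> real" where
  "D2 M i1 i2 j1 j2 = M$$(i1,j1)*M$$(i2,j2) - M$$(i1,j2)*M$$(i2,j1)"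

definition D3 :: "real mat \<Rightarrow> nat \<Rightarrow> nat \<Rightarrow> nat \<Rightarrow> nat \<Rightarrow> nat \<Rightarrow> nat \<Rightarrow> real" where
  "D3 M i1 i2 i3 j1 j2 j3 = M$$(i1,j1)*(M$$(i2,j2)*M$$(i3,j3) - M$$(i2,j3)*M$$(i3,j2))
     - M$$(i2,j1)*(M$$(i1,j2)*M$$(i3,j3) - M$$(i1,j3)*M$$(i3,j2))
     + M$$(i3,j1)*(M$$(i1,j2)*M$$(i2,j3) - M$$(i1,j3)*M$$(i2,j2))"

lemma card_sub: "I \<subseteq> {..<m} \<Longrightarrow> card {i. i < m \<and> i \<in> I} = card I"
  by (rule arg_cong[where f=card]) auto

lemma pick1: "pick {a} 0 = a"
  by (simp add: Least_equality)

lemma pick2: assumes "a < b" shows "pick {a,b} 0 = a" "pick {a,b} (Suc 0) = b"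
proof -
  show "pick {a,b} 0 = a" using assms by (auto intro!: Least_equality)
  have "{x\<in>{a,b}. x < b} = {a}" using assms by auto
  then show "pick {a,b} (Suc 0) = b"
    using pick_card_in_set[of b "{a,b}"] by (simp_all del: pick.simps)
qed

lemma pick3: assumes "a < b" "b < c" shows "pick {a,b,c} 0 = a" "pick {a,b,c} (Suc 0) = b" "pick {a,b,c} (Suc (Suc 0)) = c"
proof -
  show "pick {a,b,c} 0 = a" using assms by (auto intro!: Least_equality)
  have "{x\<in>{a,b,c}. x < b} = {a}" "{x\<in>{a,b,c}. x < c} = {a,b}" using assms by auto
  moreover have "card {a,b} = 2" using assms by auto
  ultimately show "pick {a,b,c} (Suc 0) = b" "pick {a,b,c} (Suc (Suc 0)) = c"
    using pick_card_in_set[of b "{a,b,c}"] pick_card_in_set[of c "{a,b,c}"]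
    by (simp_all del: pick.simps add: numeral_2_eq_2)
qed

lemma pick3b: assumes "a < b" "b < c" shows "pick {a,b,c} 2 = c"
  using pick3(3)[OF assms] by (simp add: numeral_2_eq_2)

lemma sub0: "det (submatrix M {} {}) = 1"
  unfolding submatrix_def by (simp add: det0)

lemma sub1: assumes "i < dim_row M" "j < dim_col M"
  shows "det (submatrix M {i} {j}) = M $$ (i,j)"
proof -
  have "submatrix M {i} {j} = mat (Suc 0) (Suc 0) (\<lambda>(a,b). M $$ (pick {i} a, pick {j} b))"
    unfolding submatrix_def using assms by (subst (1 2) card_sub) auto
  then show ?thesis by (simp add: det1 pick1 del: pick.simps)
qed

lemma sub2: assumes "i1 < i2" "i2 < dim_row M" "j1 < j2" "j2 < dim_col M"
  shows "det (submatrix M {i1,i2} {j1,j2}) = D2 M i1 i2 j1 j2"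
proof -
  have "submatrix M {i1,i2} {j1,j2} = mat 2 2 (\<lambda>(a,b). M $$ (pick {i1,i2} a, pick {j1,j2} b))"
    unfolding submatrix_def using assms by (subst (1 2) card_sub) auto
  then show ?thesis using assms by (simp add: det2 pick2 D2_def del: pick.simps)
qed

lemma sub3: assumes "i1 < i2" "i2 < i3" "i3 < dim_row M" "j1 < j2" "j2 < j3" "j3 < dim_col M"
  shows "det (submatrix M {i1,i2,i3} {j1,j2,j3}) = D3 M i1 i2 i3 j1 j2 j3"
proof -
  have "submatrix M {i1,i2,i3} {j1,j2,j3} = mat 3 3 (\<lambda>(a,b). M $$ (pick {i1,i2,i3} a, pick {j1,j2,j3} b))"
    unfolding submatrix_def using assms by (subst (1 2) card_sub) auto
  then show ?thesis using assms by (simp add: det3 pick3 pick3b D3_def del: pick.simps)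
qed

lemma T1S_1: assumes "totally_1_submodular M" "i < dim_row M" "j < dim_col M"
  shows "\<bar>M $$ (i,j)\<bar> \<le> 1"
proof -
  have "\<bar>det (submatrix M {i} {j})\<bar> \<le> 1" using assms unfolding totally_1_submodular_def by auto
  then show ?thesis using sub1[OF assms(2,3)] by simp
qed

lemma T1S_2: assumes "totally_1_submodular M" "i1 < i2" "i2 < dim_row M" "j1 < j2" "j2 < dim_col M"
  shows "\<bar>D2 M i1 i2 j1 j2\<bar> \<le> 1"
proof -
  have "\<bar>det (submatrix M {i1,i2} {j1,j2})\<bar> \<le> 1"
    using assms(1) unfolding totally_1_submodular_def using assms by (auto simp: card_insert_if)
  then show ?thesis using sub2 assms by simp
qed

lemma T1S_3: assumes "totally_1_submodular M" "i1 < i2" "i2 < i3" "i3 < dim_row M" "j1 < j2" "j2 < j3" "j3 < dim_col M"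
  shows "\<bar>D3 M i1 i2 i3 j1 j2 j3\<bar> \<le> 1"
proof -
  have "\<bar>det (submatrix M {i1,i2,i3} {j1,j2,j3})\<bar> \<le> 1"
    using assms(1) unfolding totally_1_submodular_def using assms by (auto simp: card_insert_if)
  then show ?thesis using sub3 assms by simp
qed

lemma card2_sorted: assumes "card (I::nat set) = 2" obtains a b where "a < b" "I = {a,b}"
proof -
  obtain x y where I: "I = {x,y}" "x \<noteq> y" using assms card_2_iff by metis
  show ?thesis
  proof (cases "x < y")
    case True then show ?thesis using that I by blast
  next
    case False then have "y < x" using I by simp
    then show ?thesis using that[of y x] I by (simp add: insert_commute)
  qed
qed

lemma card3_sorted: assumes "card (I::nat set) = 3" obtains a b c where "a < b" "b < c" "I = {a,b,c}"
proof -
  obtain x y z where I: "I = {x,y,z}" "x \<noteq> y" "y \<noteq> z" "x \<noteq> z" using assms card_3_iff by metis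
  consider "x<y" "y<z" | "x<z" "z<y" | "y<x" "x<z" | "y<z" "z<x" | "z<x" "x<y" | "z<y" "y<x"
    using I by (metis linorder_neqE_nat)
  then show ?thesis
  proof cases
    case 1 then show ?thesis using that I by blast
  next
    case 2 then show ?thesis using that[of x z y] I by (simp add: insert_commute)
  next
    case 3 then show ?thesis using that[of y x z] I by (simp add: insert_commute)
  next
    case 4 then show ?thesis using that[of y z x] I by (auto simp add: insert_commute)
  next
    case 5 then show ?thesis using that[of z x y] I by (auto simp add: insert_commute)
  next
    case 6 then show ?thesis using that[of z y x] I by (auto simp add: insert_commute)
  qed
qed
lemma T1S_intro:
  assumes m: "dim_row M \<le> 3"
  and C1: "\<forall>i<dim_row M. \<forall>j<dim_col M. \<bar>M $$ (i,j)\<bar> \<le> 1"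
  and C2: "\<forall>i2<dim_row M. \<forall>i1<i2. \<forall>j2<dim_col M. \<forall>j1<j2. \<bar>D2 M i1 i2 j1 j2\<bar> \<le> 1"
  and C3: "\<forall>i3<dim_row M. \<forall>i2<i3. \<forall>i1<i2. \<forall>j3<dim_col M. \<forall>j2<j3. \<forall>j1<j2. \<bar>D3 M i1 i2 i3 j1 j2 j3\<bar> \<le> 1"
  shows "totally_1_submodular M"
  unfolding totally_1_submodular_def
proof (intro allI impI)
  fix I J assume I: "I \<subseteq> {..<dim_row M}" and J: "J \<subseteq> {..<dim_col M}" and c: "card I = card J"
  have fI: "finite I" "finite J" using I J finite_subset by auto
  have "card I \<le> 3" using card_mono[OF _ I] m by simp
  then consider "card I = 0" | "card I = 1" | "card I = 2" | "card I = 3" by linarith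
  then show "\<bar>det (submatrix M I J)\<bar> \<le> 1"
  proof cases
    case 1
    then have "I = {}" "J = {}" using c fI by auto
    then show ?thesis by (simp add: sub0)
  next
    case 2
    then obtain i j where "I = {i}" "J = {j}" using c by (metis card_1_singletonE)
    then have "i < dim_row M" "j < dim_col M" using I J by auto
    then show ?thesis using C1 \<open>I = {i}\<close> \<open>J = {j}\<close> by (simp add: sub1)
  next
    case 3
    then obtain i1 i2 j1 j2 where "i1 < i2" "I = {i1,i2}" "j1 < j2" "J = {j1,j2}"
      using c by (metis card2_sorted)
    then show ?thesis using I J C2 sub2 by auto
  next
    case 4
    then obtain i1 i2 i3 j1 j2 j3 where "i1 < i2" "i2 < i3" "I = {i1,i2,i3}" "j1 < j2" "j2 < j3" "J = {j1,j2,j3}"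
      using c by (metis card3_sorted)
    then show ?thesis using I J C3 sub3 by (metis insert_subset lessThan_iff)
  qed
qed


lemma D2_swap_rows: "D2 M i2 i1 j1 j2 = - D2 M i1 i2 j1 j2" by (simp add: D2_def algebra_simps)
lemma D2_swap_cols: "D2 M i1 i2 j2 j1 = - D2 M i1 i2 j1 j2" by (simp add: D2_def algebra_simps)
lemma D2_same_col: "D2 M i1 i2 j j = 0" by (simp add: D2_def algebra_simps)

lemma T1S_2any: assumes T: "totally_1_submodular M" and "i1 \<noteq> i2" "i1 < dim_row M" "i2 < dim_row M"
  "j1 < dim_col M" "j2 < dim_col M"
  shows "\<bar>D2 M i1 i2 j1 j2\<bar> \<le> 1"
proof -
  have A: "\<bar>D2 M i1 i2 j1 j2\<bar> \<le> 1" if "i1 < i2" "i2 < dim_row M" "j1 < dim_col M" "j2 < dim_col M" for i1 i2 j1 j2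
  proof -
    consider "j1 < j2" | "j1 = j2" | "j2 < j1" by linarith
    then show ?thesis
    proof cases
      case 1 then show ?thesis using T1S_2[OF T] that by blast
    next
      case 2 then show ?thesis by (simp add: D2_same_col)
    next
      case 3 then show ?thesis using T1S_2[OF T that(1,2) 3 that(3)] by (simp add: D2_swap_cols[of M i1 i2 j1 j2])
    qed
  qed
  show ?thesis
  proof (cases "i1 < i2")
    case True then show ?thesis using A assms by blast
  next
    case False then have "i2 < i1" using assms by linarith
    then show ?thesis using A[of i2 i1 j1 j2] assms by (simp add: D2_swap_rows[of M i1 i2 j1 j2])
  qed
qed

lemma D3_swap_c12: "D3 M i1 i2 i3 j2 j1 j3 = - D3 M i1 i2 i3 j1 j2 j3" by (simp add: D3_def algebra_simps)
lemma D3_swap_c23: "D3 M i1 i2 i3 j1 j3 j2 = - D3 M i1 i2 i3 j1 j2 j3" by (simp add: D3_def algebra_simps)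
lemma D3_swap_r12: "D3 M i2 i1 i3 j1 j2 j3 = - D3 M i1 i2 i3 j1 j2 j3" by (simp add: D3_def algebra_simps)
lemma D3_swap_r23: "D3 M i1 i3 i2 j1 j2 j3 = - D3 M i1 i2 i3 j1 j2 j3" by (simp add: D3_def algebra_simps)
lemma D3_eq12: "D3 M i1 i2 i3 j j j3 = 0" by (simp add: D3_def algebra_simps)
lemma D3_eq23: "D3 M i1 i2 i3 j1 j j = 0" by (simp add: D3_def algebra_simps)
lemma D3_eq13: "D3 M i1 i2 i3 j j2 j = 0" by (simp add: D3_def algebra_simps)

lemma sort3:
  fixes P :: "nat \<Rightarrow> nat \<Rightarrow> nat \<Rightarrow> bool"
  assumes base: "\<And>a b c. a < b \<Longrightarrow> b < c \<Longrightarrow> P a b c"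
  and s12: "\<And>a b c. P a b c \<Longrightarrow> P b a c" and s23: "\<And>a b c. P a b c \<Longrightarrow> P a c b"
  and d: "x \<noteq> y" "y \<noteq> z" "x \<noteq> z"
  shows "P x y z"
proof -
  consider "x<y" "y<z" | "x<z" "z<y" | "y<x" "x<z" | "y<z" "z<x" | "z<x" "x<y" | "z<y" "y<x"
    using d by (metis linorder_neqE_nat)
  then show ?thesis
  proof cases
    case 1 then show ?thesis using base by blast
  next
    case 2 then show ?thesis using base[of x z y] s23 by blast
  next
    case 3 then show ?thesis using base[of y x z] s12 by blast
  next
    case 4 then have "P y z x" using base by blast
    then have "P y x z" using s23 by blast
    then show ?thesis using s12 by blast
  next
    case 5 then have "P z x y" using base by blast
    then have "P x z y" using s12 by blast
    then show ?thesis using s23 by blast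
  next
    case 6 then have "P z y x" using base by blast
    then have "P y z x" using s12 by blast
    then have "P y x z" using s23 by blast
    then show ?thesis using s12 by blast
  qed
qed

lemma T1S_3any: assumes T: "totally_1_submodular M"
  and i: "i1 \<noteq> i2" "i2 \<noteq> i3" "i1 \<noteq> i3" "i1 < dim_row M" "i2 < dim_row M" "i3 < dim_row M"
  and j: "j1 < dim_col M" "j2 < dim_col M" "j3 < dim_col M"
  shows "\<bar>D3 M i1 i2 i3 j1 j2 j3\<bar> \<le> 1"
proof (cases "j1 \<noteq> j2 \<and> j2 \<noteq> j3 \<and> j1 \<noteq> j3")
  case False
  then show ?thesis by (auto simp: D3_eq12 D3_eq23 D3_eq13)
next
  case True
  have cols: "\<bar>D3 M a b c j1 j2 j3\<bar> \<le> 1" if "a < b" "b < c" "c < dim_row M" for a b c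
  proof -
    let ?P = "\<lambda>x y z. x < dim_col M \<longrightarrow> y < dim_col M \<longrightarrow> z < dim_col M \<longrightarrow> \<bar>D3 M a b c x y z\<bar> \<le> 1"
    have "?P j1 j2 j3"
    proof (rule sort3[where P = ?P])
      show "?P x y z" if "x < y" "y < z" for x y z using T1S_3[OF T \<open>a<b\<close> \<open>b<c\<close> \<open>c < dim_row M\<close> that] by blast
      show "?P y x z" if "?P x y z" for x y z using that by (simp add: D3_swap_c12[of M a b c x y z])
      show "?P x z y" if "?P x y z" for x y z using that by (simp add: D3_swap_c23[of M a b c x y z])
    qed (use True in auto)
    then show ?thesis using j by blast
  qed
  let ?Q = "\<lambda>x y z. x < dim_row M \<longrightarrow> y < dim_row M \<longrightarrow> z < dim_row M \<longrightarrow> \<bar>D3 M x y z j1 j2 j3\<bar> \<le> 1"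
  have "?Q i1 i2 i3"
  proof (rule sort3[where P = ?Q])
    show "?Q x y z" if "x < y" "y < z" for x y z using cols that by blast
    show "?Q y x z" if "?Q x y z" for x y z using that by (simp add: D3_swap_r12[of M x y z])
    show "?Q x z y" if "?Q x y z" for x y z using that by (simp add: D3_swap_r23[of M x y z])
  qed (use i in auto)
  then show ?thesis using i by blast
qed

definition E2 :: "(nat \<Rightarrow> nat \<Rightarrow> int) \<Rightarrow> nat \<Rightarrow> nat \<Rightarrow> nat \<Rightarrow> nat \<Rightarrow> int" where
  "E2 H i1 i2 j1 j2 = H i1 j1 * H i2 j2 - H i1 j2 * H i2 j1"

definition E3 :: "(nat \<Rightarrow> nat \<Rightarrow> int) \<Rightarrow> nat \<Rightarrow> nat \<Rightarrow> nat \<Rightarrow> nat \<Rightarrow> nat \<Rightarrow> nat \<Rightarrow> int" where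
  "E3 H i1 i2 i3 j1 j2 j3 = H i1 j1*(H i2 j2*H i3 j3 - H i2 j3*H i3 j2)
     - H i2 j1*(H i1 j2*H i3 j3 - H i1 j3*H i3 j2)
     + H i3 j1*(H i1 j2*H i2 j3 - H i1 j3*H i2 j2)"

lemma all_list: "(\<forall>i<n. P i) \<longleftrightarrow> list_all P [0..<n]"
  by (auto simp: list_all_iff)

lemma ex_list: "(\<exists>i<n. P i) \<longleftrightarrow> list_ex P [0..<n]"
  by (auto simp: list_ex_iff)

lemma T1S_half:
  assumes dims: "dim_row M = m" "dim_col M = n" "m \<le> 3"
  and MH: "\<And>i j. i < m \<Longrightarrow> j < n \<Longrightarrow> M $$ (i,j) = of_int (H i j) / 2"
  and c1: "list_all (\<lambda>i. list_all (\<lambda>j. \<bar>H i j\<bar> \<le> 2) [0..<n]) [0..<m]"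
  and c2: "list_all (\<lambda>i2. list_all (\<lambda>i1. list_all (\<lambda>j2. list_all (\<lambda>j1.
             \<bar>E2 H i1 i2 j1 j2\<bar> \<le> 4) [0..<j2]) [0..<n]) [0..<i2]) [0..<m]"
  and c3: "list_all (\<lambda>i3. list_all (\<lambda>i2. list_all (\<lambda>i1. list_all (\<lambda>j3. list_all (\<lambda>j2. list_all (\<lambda>j1.
             \<bar>E3 H i1 i2 i3 j1 j2 j3\<bar> \<le> 8) [0..<j2]) [0..<j3]) [0..<n]) [0..<i2]) [0..<i3]) [0..<m]"
  shows "totally_1_submodular M"
proof (rule T1S_intro)
  show "dim_row M \<le> 3" using dims by simp
  show "\<forall>i<dim_row M. \<forall>j<dim_col M. \<bar>M $$ (i, j)\<bar> \<le> 1"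
  proof (intro allI impI)
    fix i j assume "i < dim_row M" "j < dim_col M"
    then have "\<bar>H i j\<bar> \<le> 2" "M $$ (i,j) = of_int (H i j) / 2" using c1 MH dims unfolding all_list[symmetric] by auto
    then show "\<bar>M $$ (i, j)\<bar> \<le> 1" by simp
  qed
  show "\<forall>i2<dim_row M. \<forall>i1<i2. \<forall>j2<dim_col M. \<forall>j1<j2. \<bar>D2 M i1 i2 j1 j2\<bar> \<le> 1"
  proof (intro allI impI)
    fix i1 i2 j1 j2 assume "i2 < dim_row M" "i1 < i2" "j2 < dim_col M" "j1 < j2"
    then have b: "i1 < m" "i2 < m" "j1 < n" "j2 < n" using dims by auto
    have "\<bar>E2 H i1 i2 j1 j2\<bar> \<le> 4" using c2 b \<open>i1 < i2\<close> \<open>j1 < j2\<close> unfolding all_list[symmetric] by auto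
    moreover have "D2 M i1 i2 j1 j2 = of_int (E2 H i1 i2 j1 j2) / 4"
      unfolding D2_def E2_def using b by (simp add: MH field_simps)
    ultimately show "\<bar>D2 M i1 i2 j1 j2\<bar> \<le> 1" by simp
  qed
  show "\<forall>i3<dim_row M. \<forall>i2<i3. \<forall>i1<i2. \<forall>j3<dim_col M. \<forall>j2<j3. \<forall>j1<j2. \<bar>D3 M i1 i2 i3 j1 j2 j3\<bar> \<le> 1"
  proof (intro allI impI)
    fix i1 i2 i3 j1 j2 j3 assume "i3 < dim_row M" "i2 < i3" "i1 < i2" "j3 < dim_col M" "j2 < j3" "j1 < j2"
    then have b: "i1 < m" "i2 < m" "i3 < m" "j1 < n" "j2 < n" "j3 < n" using dims by auto
    have "\<bar>E3 H i1 i2 i3 j1 j2 j3\<bar> \<le> 8" using c3 b \<open>i1 < i2\<close> \<open>j1 < j2\<close> \<open>i2 < i3\<close> \<open>j2 < j3\<close>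
      unfolding all_list[symmetric] by auto
    moreover have "D3 M i1 i2 i3 j1 j2 j3 = of_int (E3 H i1 i2 i3 j1 j2 j3) / 8"
      unfolding D3_def E3_def using b by (simp add: MH field_simps)
    ultimately show "\<bar>D3 M i1 i2 i3 j1 j2 j3\<bar> \<le> 1" by simp
  qed
qed


definition Box :: "(int \<times> int) set" where "Box = {-1,0,1} \<times> {-1,0,1}"
definition TU :: "(int \<times> int) set \<Rightarrow> bool" where
  "TU S \<longleftrightarrow> (\<forall>v\<in>S. \<forall>w\<in>S. \<bar>fst v * snd w - snd v * fst w\<bar> \<le> 1)"
definition noOpp :: "(int \<times> int) set \<Rightarrow> bool" where
  "noOpp S \<longleftrightarrow> (\<forall>v\<in>S. \<forall>w\<in>S. \<not> (fst v = 1 \<and> fst w = -1) \<and> \<not> (snd v = 1 \<and> snd w = -1))"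
definition noTri :: "(int \<times> int) set \<Rightarrow> bool" where
  "noTri S \<longleftrightarrow> \<not> {(1,0),(0,1),(-1,-1)} \<subseteq> S \<and> \<not> {(-1,0),(0,-1),(1,1)} \<subseteq> S
     \<and> \<not> {(1,0),(0,-1),(-1,1)} \<subseteq> S \<and> \<not> {(-1,0),(0,1),(1,-1)} \<subseteq> S"

lemma card_le_sub: "S \<subseteq> X \<Longrightarrow> finite X \<Longrightarrow> card X \<le> k \<Longrightarrow> card S \<le> k"
  using card_mono le_trans by blast

lemma L7: assumes SB: "S \<subseteq> Box" and tu: "TU S" shows "card S \<le> 7"
proof -
  have bad: False if "v \<in> S" "w \<in> S" "\<bar>fst v * snd w - snd v * fst w\<bar> = 2" for v w
    using tu that unfolding TU_def by fastforce
  show ?thesis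
  proof (cases "(1,1) \<in> S \<or> (-1,-1) \<in> S")
    case True
    then have "(1,-1) \<notin> S" "(-1,1) \<notin> S"
      using bad[of "(1,1)" "(1,-1)"] bad[of "(1,1)" "(-1,1)"] bad[of "(-1,-1)" "(1,-1)"] bad[of "(-1,-1)" "(-1,1)"]
      by auto
    then have "S \<subseteq> {(-1,-1),(-1,0),(0,-1),(0,0),(0,1),(1,0),(1,1)}" using SB by (auto simp: Box_def)
    then show ?thesis by (rule card_le_sub) auto
  next
    case False
    then have "S \<subseteq> {(-1,1),(-1,0),(0,-1),(0,0),(0,1),(1,0),(1,-1)}" using SB by (auto simp: Box_def)
    then show ?thesis by (rule card_le_sub) auto
  qed
qed

lemma L4: assumes SB: "S \<subseteq> Box" and no: "noOpp S" shows "card S \<le> 4"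
proof -
  obtain X where X: "\<forall>v\<in>S. fst v \<in> X" "card X = 2" "finite X"
  proof (cases "\<exists>v\<in>S. fst v = 1")
    case True
    then have "\<forall>v\<in>S. fst v \<in> {0,1}" using no SB unfolding noOpp_def Box_def by fastforce
    then show ?thesis using that[of "{0,1}"] by auto
  next
    case False
    then have "\<forall>v\<in>S. fst v \<in> {-1,0}" using SB unfolding Box_def by fastforce
    then show ?thesis using that[of "{-1,0}"] by auto
  qed
  obtain Y where Y: "\<forall>v\<in>S. snd v \<in> Y" "card Y = 2" "finite Y"
  proof (cases "\<exists>v\<in>S. snd v = 1")
    case True
    then have "\<forall>v\<in>S. snd v \<in> {0,1}" using no SB unfolding noOpp_def Box_def by fastforce
    then show ?thesis using that[of "{0,1}"] by auto
  next
    case False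
    then have "\<forall>v\<in>S. snd v \<in> {-1,0}" using SB unfolding Box_def by fastforce
    then show ?thesis using that[of "{-1,0}"] by auto
  qed
  have "S \<subseteq> X \<times> Y" using X Y by (auto simp: mem_Times_iff)
  then show ?thesis by (rule card_le_sub) (use X Y in \<open>auto simp: card_cartesian_product\<close>)
qed

lemma L6: assumes SB: "S \<subseteq> Box" and tu: "TU S" and nt: "noTri S" shows "card S \<le> 6"
proof -
  have bad: False if "v \<in> S" "w \<in> S" "\<bar>fst v * snd w - snd v * fst w\<bar> = 2" for v w
    using tu that unfolding TU_def by fastforce
  consider (P) "(1,1) \<in> S \<or> (-1,-1) \<in> S" | (Q) "(1,-1) \<in> S \<or> (-1,1) \<in> S"
    | (R) "(1,1) \<notin> S" "(-1,-1) \<notin> S" "(1,-1) \<notin> S" "(-1,1) \<notin> S" by blast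
  then show ?thesis
  proof cases
    case P
    then have out: "(1,-1) \<notin> S" "(-1,1) \<notin> S"
      using bad[of "(1,1)" "(1,-1)"] bad[of "(1,1)" "(-1,1)"] bad[of "(-1,-1)" "(1,-1)"] bad[of "(-1,-1)" "(-1,1)"]
      by auto
    have "(1,0) \<notin> S \<or> (0,1) \<notin> S \<or> (-1,-1) \<notin> S" using nt unfolding noTri_def by auto
    then show ?thesis
    proof (elim disjE)
      assume "(1,0) \<notin> S"
      then have "S \<subseteq> {(-1,-1),(-1,0),(0,-1),(0,0),(0,1),(1,1)}" using SB out by (auto simp: Box_def)
      then show ?thesis by (rule card_le_sub) auto
    next
      assume "(0,1) \<notin> S"
      then have "S \<subseteq> {(-1,-1),(-1,0),(0,-1),(0,0),(1,0),(1,1)}" using SB out by (auto simp: Box_def)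
      then show ?thesis by (rule card_le_sub) auto
    next
      assume "(-1,-1) \<notin> S"
      then have "S \<subseteq> {(-1,0),(0,-1),(0,0),(0,1),(1,0),(1,1)}" using SB out by (auto simp: Box_def)
      then show ?thesis by (rule card_le_sub) auto
    qed
  next
    case Q
    then have out: "(1,1) \<notin> S" "(-1,-1) \<notin> S"
      using bad[of "(1,1)" "(1,-1)"] bad[of "(1,1)" "(-1,1)"] bad[of "(-1,-1)" "(1,-1)"] bad[of "(-1,-1)" "(-1,1)"]
      by auto
    have "(1,0) \<notin> S \<or> (0,-1) \<notin> S \<or> (-1,1) \<notin> S" using nt unfolding noTri_def by auto
    then show ?thesis
    proof (elim disjE)
      assume "(1,0) \<notin> S"
      then have "S \<subseteq> {(-1,1),(-1,0),(0,-1),(0,0),(0,1),(1,-1)}" using SB out by (auto simp: Box_def)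
      then show ?thesis by (rule card_le_sub) auto
    next
      assume "(0,-1) \<notin> S"
      then have "S \<subseteq> {(-1,1),(-1,0),(0,1),(0,0),(1,0),(1,-1)}" using SB out by (auto simp: Box_def)
      then show ?thesis by (rule card_le_sub) auto
    next
      assume "(-1,1) \<notin> S"
      then have "S \<subseteq> {(-1,0),(0,-1),(0,0),(0,1),(1,0),(1,-1)}" using SB out by (auto simp: Box_def)
      then show ?thesis by (rule card_le_sub) auto
    qed
  next
    case R
    then have "S \<subseteq> {(-1,0),(0,-1),(0,0),(0,1),(1,0)}" using SB by (auto simp: Box_def)
    then show ?thesis by (rule card_le_sub) auto
  qed
qed

lemma L_all: "S \<in> Pow Box \<Longrightarrow> (TU S \<longrightarrow> card S \<le> 7) \<and> (noOpp S \<longrightarrow> card S \<le> 4) \<and> (TU S \<and> noTri S \<longrightarrow> card S \<le> 6)"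
  using L7 L4 L6 by blast

definition tdet :: "int \<times> int \<Rightarrow> int \<times> int \<Rightarrow> int \<times> int \<Rightarrow> int" where
  "tdet v1 v2 v3 = (fst v2 * snd v3 - fst v3 * snd v2) - (fst v1 * snd v3 - fst v3 * snd v1)
     + (fst v1 * snd v2 - fst v2 * snd v1)"

lemma layer_bound:
  fixes S :: "(int \<times> int) set" and p :: real
  assumes SB: "S \<subseteq> Box" and tu: "TU S"
  and FB: "\<forall>v\<in>S. \<forall>w\<in>S. \<bar>p * of_int (fst w - fst v)\<bar> \<le> 1 \<and> \<bar>p * of_int (snd w - snd v)\<bar> \<le> 1"
  and FC: "\<forall>v1\<in>S. \<forall>v2\<in>S. \<forall>v3\<in>S. \<bar>p * of_int (tdet v1 v2 v3)\<bar> \<le> 1"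
  shows "card S \<le> 7" "\<bar>p\<bar> > 1/2 \<Longrightarrow> card S \<le> 4" "\<bar>p\<bar> = 1/2 \<Longrightarrow> card S \<le> 6"
proof -
  have L: "(TU S \<longrightarrow> card S \<le> 7) \<and> (noOpp S \<longrightarrow> card S \<le> 4) \<and> (TU S \<and> noTri S \<longrightarrow> card S \<le> 6)"
    using L_all SB by blast
  show "card S \<le> 7" using L tu by blast
  show "card S \<le> 4" if "\<bar>p\<bar> > 1/2"
  proof -
    have "noOpp S" unfolding noOpp_def
    proof (intro ballI conjI notI)
      fix v w assume vw: "v \<in> S" "w \<in> S" "fst v = 1 \<and> fst w = -1"
      have "\<bar>p * of_int (fst w - fst v)\<bar> \<le> 1" using FB vw(1,2) by blast
      moreover have "fst w - fst v = -2" using vw(3) by simp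
      ultimately have "\<bar>p\<bar> * 2 \<le> 1" by (simp add: abs_mult)
      then show False using that by simp
    next
      fix v w assume vw: "v \<in> S" "w \<in> S" "snd v = 1 \<and> snd w = -1"
      have "\<bar>p * of_int (snd w - snd v)\<bar> \<le> 1" using FB vw(1,2) by blast
      moreover have "snd w - snd v = -2" using vw(3) by simp
      ultimately have "\<bar>p\<bar> * 2 \<le> 1" by (simp add: abs_mult)
      then show False using that by simp
    qed
    then show ?thesis using L by blast
  qed
  show "card S \<le> 6" if "\<bar>p\<bar> = 1/2"
  proof -
    have tri: False if "v1 \<in> S" "v2 \<in> S" "v3 \<in> S" "\<bar>tdet v1 v2 v3\<bar> = 3" for v1 v2 v3
    proof -
      have "\<bar>p * of_int (tdet v1 v2 v3)\<bar> \<le> 1" using FC that by blast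
      then have "\<bar>p\<bar> * 3 \<le> 1" using that(4) by (simp add: abs_mult flip: of_int_abs)
      then show False using \<open>\<bar>p\<bar> = 1/2\<close> by simp
    qed
    have "noTri S" unfolding noTri_def
      using tri[of "(1,0)" "(0,1)" "(-1,-1)"] tri[of "(-1,0)" "(0,-1)" "(1,1)"]
        tri[of "(1,0)" "(0,-1)" "(-1,1)"] tri[of "(-1,0)" "(0,1)" "(1,-1)"]
      by (auto simp: tdet_def)
    then show ?thesis using L tu by blast
  qed
qed

lemma idx3: "i < (3::nat) \<Longrightarrow> r < 3 \<Longrightarrow> s < 3 \<Longrightarrow> u < 3 \<Longrightarrow> r \<noteq> s \<Longrightarrow> r \<noteq> u \<Longrightarrow> s \<noteq> u
  \<Longrightarrow> i = r \<or> i = s \<or> i = u"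
  by linarith

lemma shift_dims: "dim_row (shift_mat t A) = dim_row A" "dim_col (shift_mat t A) = dim_col A"
  by (simp_all add: shift_mat_def)

lemma shift_idx: "i < dim_row A \<Longrightarrow> j < dim_col A \<Longrightarrow> shift_mat t A $$ (i,j) = t $ i + of_int (A $$ (i,j))"
  by (simp add: shift_mat_def)

lemma pos_row:
  assumes T: "totally_1_submodular (shift_mat t A)" and i: "i < dim_row A" and j: "j < dim_col A"
  and e: "A $$ (i,j) \<in> {-1,0,1}" and p: "0 < t $ i"
  shows "A $$ (i,j) \<in> {-1,0}"
proof -
  have "\<bar>shift_mat t A $$ (i,j)\<bar> \<le> 1" using T1S_1[OF T] i j by (simp add: shift_dims)
  then have "\<bar>t $ i + of_int (A $$ (i,j))\<bar> \<le> 1" using i j by (simp add: shift_idx)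
  then show ?thesis using e p by auto
qed

lemma col_eqI: assumes "A \<in> carrier_mat m n" "j < n" "k < n" "\<And>i. i < m \<Longrightarrow> A $$ (i,j) = A $$ (i,k)"
  shows "col A j = col A k"
  using assms by (intro eq_vecI) auto

lemma hard:
  fixes t :: "real vec" and A :: "int mat"
  assumes A: "A \<in> carrier_mat 3 n" and ent: "\<forall>i<3. \<forall>j<n. A$$(i,j) \<in> {-1,0,1}"
  and dist: "\<forall>j<n. \<forall>j'<n. j \<noteq> j' \<longrightarrow> col A j \<noteq> col A j'"
  and rsu: "r < 3" "s < 3" "u < 3" "r \<noteq> s" "r \<noteq> u" "s \<noteq> u"
  and ts: "t $ s = 0" "t $ u = 0" and tr: "0 < t $ r" "t $ r < 1"
  and T: "totally_1_submodular (shift_mat t A)"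
  shows "n \<le> 12"
proof -
  define M where "M = shift_mat t A"
  have dimM: "dim_row M = 3" "dim_col M = n" using A by (simp_all add: M_def shift_dims)
  have Mij: "M $$ (i,j) = t $ i + of_int (A $$ (i,j))" if "i < 3" "j < n" for i j
    using A that by (simp add: M_def shift_idx)
  define \<tau> where "\<tau> = t $ r"
  have rowr: "A $$ (r,j) \<in> {-1,0}" if "j < n" for j
    using pos_row[OF T] A ent rsu tr that by auto
  define g where "g j = (A $$ (s,j), A $$ (u,j))" for j
  define N where "N a = {j. j < n \<and> A $$ (r,j) = a}" for a :: int
  have injN: "inj_on g (N a)" for a
  proof (rule inj_onI)
    fix j k assume jk: "j \<in> N a" "k \<in> N a" "g j = g k"
    have "col A j = col A k"
    proof (rule col_eqI[OF A])
      show "j < n" "k < n" using jk by (auto simp: N_def)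
      fix i :: nat assume "i < 3"
      then have "i = r \<or> i = s \<or> i = u" using idx3 rsu by blast
      then show "A $$ (i, j) = A $$ (i, k)" using jk by (auto simp: N_def g_def)
    qed
    then show "j = k" using dist jk by (auto simp: N_def)
  qed
  have split: "{..<n} = N 0 \<union> N (-1)" using rowr by (auto simp: N_def)
  have disj: "N 0 \<inter> N (-1) = {}" by (auto simp: N_def)
  have fin: "finite (N a)" for a by (auto simp: N_def)
  have n_eq: "n = card (g ` N 0) + card (g ` N (-1))"
  proof -
    have "n = card (N 0 \<union> N (-1))" using split by (metis card_lessThan)
    also have "\<dots> = card (N 0) + card (N (-1))" using disj fin by (simp add: card_Un_disjoint)
    finally show ?thesis using injN by (simp add: card_image)
  qed
  have layer: "card (g ` N a) \<le> 7 \<and> (\<bar>\<tau> + of_int a\<bar> > 1/2 \<longrightarrow> card (g ` N a) \<le> 4)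
      \<and> (\<bar>\<tau> + of_int a\<bar> = 1/2 \<longrightarrow> card (g ` N a) \<le> 6)" for a
  proof -
    let ?S = "g ` N a" and ?p = "\<tau> + of_int a"
    have jn: "j < n" "A $$ (r,j) = a" if "j \<in> N a" for j using that by (auto simp: N_def)
    have SB: "?S \<subseteq> Box" using ent rsu by (auto simp: g_def N_def Box_def)
    have tu: "TU ?S" unfolding TU_def
    proof (intro ballI)
      fix v w assume "v \<in> ?S" "w \<in> ?S"
      then obtain j k where jk: "j \<in> N a" "k \<in> N a" "v = g j" "w = g k" by blast
      have "\<bar>D2 M s u j k\<bar> \<le> 1" using T1S_2any[of M s u j k] T jk jn rsu dimM by (simp add: M_def)
      moreover have "D2 M s u j k = of_int (fst v * snd w - snd v * fst w)"
        using jk jn rsu ts by (simp add: D2_def Mij g_def)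
      ultimately have "\<bar>real_of_int (fst v * snd w - snd v * fst w)\<bar> \<le> 1" by simp
      then show "\<bar>fst v * snd w - snd v * fst w\<bar> \<le> 1" by linarith
    qed
    have FB: "\<forall>v\<in>?S. \<forall>w\<in>?S. \<bar>?p * of_int (fst w - fst v)\<bar> \<le> 1 \<and> \<bar>?p * of_int (snd w - snd v)\<bar> \<le> 1"
    proof (intro ballI conjI)
      fix v w assume "v \<in> ?S" "w \<in> ?S"
      then obtain j k where jk: "j \<in> N a" "k \<in> N a" "v = g j" "w = g k" by blast
      have "\<bar>D2 M r s j k\<bar> \<le> 1" using T1S_2any[of M r s j k] T jk jn rsu dimM by (simp add: M_def)
      moreover have "D2 M r s j k = ?p * of_int (fst w - fst v)"
        using jk jn rsu ts by (simp add: D2_def Mij g_def \<tau>_def algebra_simps)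
      ultimately show "\<bar>?p * of_int (fst w - fst v)\<bar> \<le> 1" by simp
      have "\<bar>D2 M r u j k\<bar> \<le> 1" using T1S_2any[of M r u j k] T jk jn rsu dimM by (simp add: M_def)
      moreover have "D2 M r u j k = ?p * of_int (snd w - snd v)"
        using jk jn rsu ts by (simp add: D2_def Mij g_def \<tau>_def algebra_simps)
      ultimately show "\<bar>?p * of_int (snd w - snd v)\<bar> \<le> 1" by simp
    qed
    have FC: "\<forall>v1\<in>?S. \<forall>v2\<in>?S. \<forall>v3\<in>?S. \<bar>?p * of_int (tdet v1 v2 v3)\<bar> \<le> 1"
    proof (intro ballI)
      fix v1 v2 v3 assume "v1 \<in> ?S" "v2 \<in> ?S" "v3 \<in> ?S"
      then obtain j1 j2 j3 where jk: "j1 \<in> N a" "j2 \<in> N a" "j3 \<in> N a" "v1 = g j1" "v2 = g j2" "v3 = g j3"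
        by blast
      have "\<bar>D3 M r s u j1 j2 j3\<bar> \<le> 1" using T1S_3any[of M r s u j1 j2 j3] T jk jn rsu dimM by (simp add: M_def)
      moreover have "D3 M r s u j1 j2 j3 = ?p * of_int (tdet v1 v2 v3)"
        using jk jn rsu ts by (simp add: D3_def Mij g_def \<tau>_def tdet_def algebra_simps)
      ultimately show "\<bar>?p * of_int (tdet v1 v2 v3)\<bar> \<le> 1" by simp
    qed
    show ?thesis using layer_bound[OF SB tu FB FC] by blast
  qed
  have "\<tau> < 1/2 \<or> \<tau> = 1/2 \<or> \<tau> > 1/2" by linarith
  moreover have "0 < \<tau>" "\<tau> < 1" using tr by (simp_all add: \<tau>_def)
  ultimately show ?thesis using layer[of 0] layer[of "-1"] n_eq by (auto simp: abs_if split: if_splits)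
qed


lemma t_pos:
  fixes t :: "real vec"
  assumes "t \<in> carrier_vec m" "\<forall>i<m. 0 \<le> t $ i" "t \<noteq> 0\<^sub>v m"
  shows "\<exists>i<m. 0 < t $ i"
proof (rule ccontr)
  assume "\<not> (\<exists>i<m. 0 < t $ i)"
  then have "\<forall>i<m. t $ i = 0" using assms(2) by force
  then have "t = 0\<^sub>v m" using assms(1) by (intro eq_vecI) auto
  then show False using assms(3) by simp
qed

lemma upper2: assumes "shifted_admissible 2 n" shows "n \<le> 6"
proof -
  obtain t :: "real vec" and A :: "int mat" where
    t: "t \<in> carrier_vec 2" "\<forall>i<2. 0 \<le> t $ i \<and> t $ i < 1" "t \<noteq> 0\<^sub>v 2"
    and A: "A \<in> carrier_mat 2 n" and ent: "\<forall>i<2. \<forall>j<n. A $$ (i,j) \<in> {-1, 0, 1}"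
    and dist: "\<forall>j<n. \<forall>j'<n. j \<noteq> j' \<longrightarrow> col A j \<noteq> col A j'"
    and T: "totally_1_submodular (shift_mat t A)"
    using assms unfolding shifted_admissible_def by blast
  define X where "X i = (if 0 < t $ i then {-1,0} else {-1,0,1::int})" for i
  define f where "f j = (A $$ (0,j), A $$ (1,j))" for j
  have inj: "inj_on f {..<n}"
  proof (rule inj_onI)
    fix j k assume jk: "j \<in> {..<n}" "k \<in> {..<n}" "f j = f k"
    have "col A j = col A k"
    proof (rule col_eqI[OF A])
      show "j < n" "k < n" using jk by auto
      fix i :: nat assume "i < 2"
      then have "i = 0 \<or> i = 1" by linarith
      then show "A $$ (i, j) = A $$ (i, k)" using jk by (auto simp: f_def)
    qed
    then show "j = k" using dist jk by auto
  qed
  have inX: "A $$ (i,j) \<in> X i" if "i < 2" "j < n" for i j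
    using pos_row[OF T, of i j] A ent that unfolding X_def by auto
  have sub: "f ` {..<n} \<subseteq> X 0 \<times> X 1" using inX by (auto simp: f_def)
  obtain i where i: "i < 2" "0 < t $ i" using t_pos[of t 2] t by auto
  have "card (X 0 \<times> X 1) \<le> 6"
  proof -
    have "i = 0 \<or> i = 1" using i by linarith
    then show ?thesis using i by (auto simp: X_def card_cartesian_product)
  qed
  moreover have "n = card (f ` {..<n})" using inj by (simp add: card_image)
  moreover have "card (f ` {..<n}) \<le> card (X 0 \<times> X 1)" using sub by (intro card_mono) (auto simp: X_def)
  ultimately show ?thesis by linarith
qed

lemma upper3: assumes "shifted_admissible 3 n" shows "n \<le> 12"
proof -
  obtain t :: "real vec" and A :: "int mat" where
    t: "t \<in> carrier_vec 3" "\<forall>i<3. 0 \<le> t $ i \<and> t $ i < 1" "t \<noteq> 0\<^sub>v 3"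
    and A: "A \<in> carrier_mat 3 n" and ent: "\<forall>i<3. \<forall>j<n. A $$ (i,j) \<in> {-1, 0, 1}"
    and dist: "\<forall>j<n. \<forall>j'<n. j \<noteq> j' \<longrightarrow> col A j \<noteq> col A j'"
    and T: "totally_1_submodular (shift_mat t A)"
    using assms unfolding shifted_admissible_def by blast
  define X where "X i = (if 0 < t $ i then {-1,0} else {-1,0,1::int})" for i
  define f where "f j = (A $$ (0,j), A $$ (1,j), A $$ (2,j))" for j
  have inj: "inj_on f {..<n}"
  proof (rule inj_onI)
    fix j k assume jk: "j \<in> {..<n}" "k \<in> {..<n}" "f j = f k"
    have "col A j = col A k"
    proof (rule col_eqI[OF A])
      show "j < n" "k < n" using jk by auto
      fix i :: nat assume "i < 3"
      then have "i = 0 \<or> i = 1 \<or> i = 2" by linarith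
      then show "A $$ (i, j) = A $$ (i, k)" using jk by (auto simp: f_def)
    qed
    then show "j = k" using dist jk by auto
  qed
  have inX: "A $$ (i,j) \<in> X i" if "i < 3" "j < n" for i j
    using pos_row[OF T, of i j] A ent that unfolding X_def by auto
  have sub: "f ` {..<n} \<subseteq> X 0 \<times> X 1 \<times> X 2" using inX by (auto simp: f_def)
  have nf: "n = card (f ` {..<n})" using inj by (simp add: card_image)
  have cm: "card (f ` {..<n}) \<le> card (X 0 \<times> X 1 \<times> X 2)" using sub by (intro card_mono) (auto simp: X_def)
  have t0: "t $ i = 0" if "i < 3" "\<not> 0 < t $ i" for i using t that by force
  obtain i where i: "i < 3" "0 < t $ i" using t_pos[of t 3] t by auto
  have hardA: "n \<le> 12" if "r < 3" "s < 3" "u < 3" "r \<noteq> s" "r \<noteq> u" "s \<noteq> u" "t $ s = 0" "t $ u = 0" "0 < t $ r" for r s u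
    using hard[OF A ent dist that(1-8)] that t T by auto
  consider "0 < t $ 0" "t $ 1 = 0" "t $ 2 = 0" | "t $ 0 = 0" "0 < t $ 1" "t $ 2 = 0" | "t $ 0 = 0" "t $ 1 = 0" "0 < t $ 2"
    | "card (X 0 \<times> X 1 \<times> X 2) \<le> 12"
  proof -
    have "i = 0 \<or> i = 1 \<or> i = 2" using i by linarith
    moreover have "t $ 0 = 0 \<or> 0 < t $ 0" "t $ 1 = 0 \<or> 0 < t $ 1" "t $ 2 = 0 \<or> 0 < t $ 2" using t0 by force+
    moreover have "card (X 0 \<times> X 1 \<times> X 2) = card (X 0) * card (X 1) * card (X 2)"
      by (simp add: card_cartesian_product X_def)
    ultimately show ?thesis using that i by (auto simp: X_def)
  qed
  then show ?thesis
  proof cases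
    case 1 then show ?thesis using hardA[of 0 1 2] by simp
  next
    case 2 then show ?thesis using hardA[of 1 0 2] by simp
  next
    case 3 then show ?thesis using hardA[of 2 0 1] by simp
  next
    case 4 then show ?thesis using nf cm by linarith
  qed
qed

lemma adm_intro:
  fixes G :: "nat \<Rightarrow> nat \<Rightarrow> int" and Tn :: "nat \<Rightarrow> int"
  assumes m: "m \<le> 3"
  and tc: "\<forall>i<m. 0 \<le> Tn i \<and> Tn i < 2" and tnz: "kk < m" "Tn kk \<noteq> 0"
  and gE: "list_all (\<lambda>i. list_all (\<lambda>j. G i j = -1 \<or> G i j = 0 \<or> G i j = 1) [0..<n]) [0..<m]"
  and gD: "list_all (\<lambda>j. list_all (\<lambda>j'. j = j' \<or> list_ex (\<lambda>i. G i j \<noteq> G i j') [0..<m]) [0..<n]) [0..<n]"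
  and c1: "list_all (\<lambda>i. list_all (\<lambda>j. \<bar>Tn i + 2 * G i j\<bar> \<le> 2) [0..<n]) [0..<m]"
  and c2: "list_all (\<lambda>i2. list_all (\<lambda>i1. list_all (\<lambda>j2. list_all (\<lambda>j1.
             \<bar>E2 (\<lambda>i j. Tn i + 2 * G i j) i1 i2 j1 j2\<bar> \<le> 4) [0..<j2]) [0..<n]) [0..<i2]) [0..<m]"
  and c3: "list_all (\<lambda>i3. list_all (\<lambda>i2. list_all (\<lambda>i1. list_all (\<lambda>j3. list_all (\<lambda>j2. list_all (\<lambda>j1.
             \<bar>E3 (\<lambda>i j. Tn i + 2 * G i j) i1 i2 i3 j1 j2 j3\<bar> \<le> 8) [0..<j2]) [0..<j3]) [0..<n]) [0..<i2]) [0..<i3]) [0..<m]"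
  shows "shifted_admissible m n"
proof -
  define t :: "real vec" where "t = vec m (\<lambda>i. of_int (Tn i) / 2)"
  define A :: "int mat" where "A = mat m n (\<lambda>(i,j). G i j)"
  have tC: "t \<in> carrier_vec m" by (simp add: t_def)
  have tB: "\<forall>i<m. 0 \<le> t $ i \<and> t $ i < 1" using tc by (simp add: t_def)
  have tN: "t \<noteq> 0\<^sub>v m"
  proof
    assume "t = 0\<^sub>v m"
    then have "t $ kk = 0" using tnz by simp
    then show False using tnz by (simp add: t_def)
  qed
  have AC: "A \<in> carrier_mat m n" by (simp add: A_def)
  have AE: "\<forall>i<m. \<forall>j<n. A $$ (i,j) \<in> {-1, 0, 1}" using gE unfolding all_list[symmetric] by (auto simp: A_def)
  have AD: "\<forall>j<n. \<forall>j'<n. j \<noteq> j' \<longrightarrow> col A j \<noteq> col A j'"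
  proof (intro allI impI)
    fix j j' assume jj: "j < n" "j' < n" "j \<noteq> j'"
    then obtain i where i: "i < m" "G i j \<noteq> G i j'" using gD unfolding all_list[symmetric] ex_list[symmetric] by blast
    then have "col A j $ i \<noteq> col A j' $ i" using jj by (simp add: A_def)
    then show "col A j \<noteq> col A j'" by metis
  qed
  have TS: "totally_1_submodular (shift_mat t A)"
  proof (rule T1S_half[where H = "\<lambda>i j. Tn i + 2 * G i j"])
    show "dim_row (shift_mat t A) = m" "dim_col (shift_mat t A) = n" by (simp_all add: shift_dims A_def)
    show "m \<le> 3" by fact
    show "shift_mat t A $$ (i, j) = real_of_int (Tn i + 2 * G i j) / 2" if "i < m" "j < n" for i j
      using that by (simp add: shift_idx A_def t_def field_simps)
  qed (use c1 c2 c3 in auto)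
  show ?thesis unfolding shifted_admissible_def using tC tB tN AC AE AD TS by blast
qed

definition T2 :: "nat \<Rightarrow> int" where "T2 i = (if i = 0 then 1 else 0)"
definition G2 :: "nat \<Rightarrow> nat \<Rightarrow> int" where
  "G2 i j = (if i = 0 then (if j < 3 then -1 else 0) else int (j mod 3) - 1)"
definition T3 :: "nat \<Rightarrow> int" where "T3 i = (if i = 2 then 0 else 1)"
definition G3 :: "nat \<Rightarrow> nat \<Rightarrow> int" where
  "G3 i j = (if i = 0 then (if j < 6 then -1 else 0) else if i = 1 then (if (j div 3) mod 2 = 0 then -1 else 0) else int (j mod 3) - 1)"

lemma adm26: "shifted_admissible 2 6"
proof (rule adm_intro[where G = G2 and Tn = T2 and kk = 0])
  show "\<forall>i<2. 0 \<le> T2 i \<and> T2 i < 2" by (simp add: T2_def)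
qed (code_simp | simp add: T2_def)+

lemma adm312: "shifted_admissible 3 12"
proof (rule adm_intro[where G = G3 and Tn = T3 and kk = 0])
  show "\<forall>i<3. 0 \<le> T3 i \<and> T3 i < 2" by (simp add: T3_def)
qed (code_simp | simp add: T3_def)+

theorem proposition2p5:
  shows "shifted_heller 2 = 6 \<and> shifted_heller 3 = 12"
  unfolding shifted_heller_def
  using Greatest_equality[of "shifted_admissible 2" 6, OF adm26 upper2]
    Greatest_equality[of "shifted_admissible 3" 12, OF adm312 upper3]
  by blast

end
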